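(* Let $X_1,\dots,X_n$ be i.i.d. from a distribution $\mathrm{P}$, let $1\le k<n$, and let $s$ be a real-valued permutation-symmetric kernel of $k$ arguments with $\mathbb{E}[s(X_1,\dots,X_k)^2]<\infty$. For each $k$-subset $S\subseteq\{1,\dots,n\}$ write $s(X_S)$ for the kernel evaluated at the observations indexed by $S$. Define $$e_j=\binom{n-1}{k-1}^{-1}\sum_{S\ni j}s(X_S),\qquad s_0=\binom{n}{k}^{-1}\sum_S s(X_S),\qquad \mathrm{ps}\text{-}\mathrm{IJ}_\mathrm{U}=\frac{k^2}{n^2}\sum_{j=1}^n(e_j-s_0)^2 .$$ Then $$\mathbb{E}[\mathrm{ps}\text{-}\mathrm{IJ}_\mathrm{U}]=\sum_{j=1}^k r_j\binom{k}{j}^2\binom{n}{j}^{-1}V_j,\qquad r_j=\left(\frac{n-k}{n}\right)^2\frac{j}{1-j/n}.$$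
   Context: Hoeffding (H-)decomposition: let $\theta=\mathbb{E}[s(X_1,\dots,X_k)]$ and for $c=1,\dots,k$ let $s_c(x_1,\dots,x_c)=\mathbb{E}[s(x_1,\dots,x_c,X_{c+1},\dots,X_k)]-\theta$. Define recursively $s^1=s_1$ and $s^c(x_1,\dots,x_c)=s_c(x_1,\dots,x_c)-\sum_{\emptyset\ne A\subsetneq\{1,\dots,c\}}s^{|A|}(x_A)$. Set $V_j=\mathrm{Var}(s^j(X_1,\dots,X_j))$. (For reference, the U-statistic $s_0$ has variance $\sum_{j=1}^k\binom{k}{j}^2\binom{n}{j}^{-1}V_j$.) *)

theory Defs
  imports "HOL-Probability.Probability"
begin

text \<open>A kernel of k arguments is a function on lists (of length k).
  P is the common distribution of the observations.\<close>

definition kernel_mean :: "('b list \<Rightarrow> real) \<Rightarrow> 'b measure \<Rightarrow> nat \<Rightarrow> real" where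
  "kernel_mean s P k = (\<integral>y. s (map y [0..<k]) \<partial>(PiM {..<k} (\<lambda>_. P)))"

definition hsc :: "('b list \<Rightarrow> real) \<Rightarrow> 'b measure \<Rightarrow> nat \<Rightarrow> 'b list \<Rightarrow> real" where
  "hsc s P k xs =
     (\<integral>y. s (xs @ map y [0..<k - length xs]) \<partial>(PiM {..<k - length xs} (\<lambda>_. P)))
     - kernel_mean s P k"

lemma hterm_term_aux:
  assumes "A \<subseteq> {..<length xs}" "A \<noteq> {..<length xs}"
  shows "length (nths xs A) < length xs"
proof -
  have "{i. i < length xs \<and> i \<in> A} = A" using assms(1) by auto
  moreover have "card A < card {..<length xs}"
    using assms by (meson finite_lessThan psubsetI psubset_card_mono)
  ultimately show ?thesis by (simp add: length_nths)
qed

function hterm :: "('b list \<Rightarrow> real) \<Rightarrow> 'b measure \<Rightarrow> nat \<Rightarrow> 'b list \<Rightarrow> real" where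
  "hterm s P k xs = hsc s P k xs -
     (\<Sum>A\<in>{A. A \<subseteq> {..<length xs} \<and> A \<noteq> {} \<and> A \<noteq> {..<length xs}}.
        hterm s P k (nths xs A))"
  by auto
termination
  by (relation "Wellfounded.measure (\<lambda>(s, P, k, xs). length xs)") (auto intro: hterm_term_aux)

declare hterm.simps[simp del]

definition hvar :: "('b list \<Rightarrow> real) \<Rightarrow> 'b measure \<Rightarrow> nat \<Rightarrow> nat \<Rightarrow> real" where
  "hvar s P k j =
     (\<integral>y. (hterm s P k (map y [0..<j])
            - (\<integral>z. hterm s P k (map z [0..<j]) \<partial>(PiM {..<j} (\<lambda>_. P))))\<^sup>2
        \<partial>(PiM {..<j} (\<lambda>_. P)))"

text \<open>s(X_S) for a finite index set S (symmetry makes the order irrelevant).\<close>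
definition kernel_at :: "('b list \<Rightarrow> real) \<Rightarrow> (nat \<Rightarrow> 'a \<Rightarrow> 'b) \<Rightarrow> nat set \<Rightarrow> 'a \<Rightarrow> real" where
  "kernel_at s X S \<omega> = s (map (\<lambda>i. X i \<omega>) (sorted_list_of_set S))"

definition e_stat :: "('b list \<Rightarrow> real) \<Rightarrow> (nat \<Rightarrow> 'a \<Rightarrow> 'b) \<Rightarrow> nat \<Rightarrow> nat \<Rightarrow> nat \<Rightarrow> 'a \<Rightarrow> real" where
  "e_stat s X n k j \<omega> = (1 / real ((n - 1) choose (k - 1))) *
     (\<Sum>S\<in>{S. S \<subseteq> {1..n} \<and> card S = k \<and> j \<in> S}. kernel_at s X S \<omega>)"

definition s0_stat :: "('b list \<Rightarrow> real) \<Rightarrow> (nat \<Rightarrow> 'a \<Rightarrow> 'b) \<Rightarrow> nat \<Rightarrow> nat \<Rightarrow> 'a \<Rightarrow> real" where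
  "s0_stat s X n k \<omega> = (1 / real (n choose k)) *
     (\<Sum>S\<in>{S. S \<subseteq> {1..n} \<and> card S = k}. kernel_at s X S \<omega>)"

definition psIJ_U :: "('b list \<Rightarrow> real) \<Rightarrow> (nat \<Rightarrow> 'a \<Rightarrow> 'b) \<Rightarrow> nat \<Rightarrow> nat \<Rightarrow> 'a \<Rightarrow> real" where
  "psIJ_U s X n k \<omega> = (real k ^ 2 / real n ^ 2) *
     (\<Sum>j=1..n. (e_stat s X n k j \<omega> - s0_stat s X n k \<omega>)\<^sup>2)"

end

theory Submission
  imports Defs
begin

definition sq :: "'a measure \<Rightarrow> ('a \<Rightarrow> real) \<Rightarrow> bool" where
  "sq M f \<longleftrightarrow> f \<in> borel_measurable M \<and> integrable M (\<lambda>x. (f x)\<^sup>2)"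

lemma sqD: "sq M f \<Longrightarrow> f \<in> borel_measurable M" "sq M f \<Longrightarrow> integrable M (\<lambda>x. (f x)\<^sup>2)"
  by (auto simp: sq_def)

lemma sq_mult_integrable:
  assumes "sq M f" "sq M g"
  shows "integrable M (\<lambda>x. f x * g x)"
proof (rule Bochner_Integration.integrable_bound)
  show "integrable M (\<lambda>x. (f x)\<^sup>2 + (g x)\<^sup>2)" using assms by (auto simp: sq_def)
  show "(\<lambda>x. f x * g x) \<in> borel_measurable M" using assms by (auto simp: sq_def)
  show "AE x in M. norm (f x * g x) \<le> norm ((f x)\<^sup>2 + (g x)\<^sup>2)"
  proof (rule AE_I2)
    fix x
    have "2 * \<bar>f x\<bar> * \<bar>g x\<bar> \<le> (f x)\<^sup>2 + (g x)\<^sup>2"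
      using sum_squares_bound[of "\<bar>f x\<bar>" "\<bar>g x\<bar>"] by (simp add: power2_eq_square)
    moreover have "norm (f x * g x) = \<bar>f x\<bar> * \<bar>g x\<bar>" by (simp add: abs_mult)
    moreover have "norm ((f x)\<^sup>2 + (g x)\<^sup>2) = (f x)\<^sup>2 + (g x)\<^sup>2" by simp
    moreover have "0 \<le> \<bar>f x\<bar> * \<bar>g x\<bar>" by simp
    ultimately show "norm (f x * g x) \<le> norm ((f x)\<^sup>2 + (g x)\<^sup>2)"
      by linarith
  qed
qed

lemma sq_const: "finite_measure M \<Longrightarrow> sq M (\<lambda>_. c)"
  by (auto simp: sq_def finite_measure.integrable_const)

lemma sq_integrable: "finite_measure M \<Longrightarrow> sq M f \<Longrightarrow> integrable M f"
  using sq_mult_integrable[of M f "\<lambda>_. 1"] sq_const[of M 1] by simp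

lemma sq_add: assumes "sq M f" "sq M g" shows "sq M (\<lambda>x. f x + g x)"
proof -
  have "integrable M (\<lambda>x. (f x)\<^sup>2 + (g x)\<^sup>2 + 2 * (f x * g x))"
    using assms sq_mult_integrable[OF assms] by (auto simp: sq_def)
  then show ?thesis using assms by (auto simp: sq_def power2_sum algebra_simps)
qed

lemma sq_cmult: assumes "sq M f" shows "sq M (\<lambda>x. c * f x)"
  using assms by (auto simp: sq_def power_mult_distrib)

lemma sq_minus: assumes "sq M f" shows "sq M (\<lambda>x. - f x)"
  using sq_cmult[OF assms, of "-1"] by simp

lemma sq_diff: assumes "sq M f" "sq M g" shows "sq M (\<lambda>x. f x - g x)"
  using sq_add[OF assms(1) sq_minus[OF assms(2)]] by simp

lemma sq_sum: assumes "finite_measure M" "\<And>i. i \<in> A \<Longrightarrow> sq M (f i)" shows "sq M (\<lambda>x. \<Sum>i\<in>A. f i x)"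
  using assms(2)
proof (induction A rule: infinite_finite_induct)
  case (infinite A) then show ?case using sq_const[OF assms(1)] by simp
next
  case empty then show ?case using sq_const[OF assms(1)] by simp
next
  case (insert a A) then show ?case by (simp add: sq_add)
qed

lemma sq_cong: assumes "sq M f" "\<And>x. x \<in> space M \<Longrightarrow> f x = g x" shows "sq M g"
proof -
  have "g \<in> borel_measurable M" using assms measurable_cong[of M f g] by (auto simp: sq_def)
  moreover have "integrable M (\<lambda>x. (f x)\<^sup>2) = integrable M (\<lambda>x. (g x)\<^sup>2)"
    using assms(2) by (intro Bochner_Integration.integrable_cong) auto
  moreover have "integrable M (\<lambda>x. (f x)\<^sup>2)" using assms by (simp add: sq_def)
  ultimately show ?thesis by (simp add: sq_def)
qed

lemma sq_distr:
  assumes "T \<in> measurable M N" "f \<in> borel_measurable N" "integrable (distr M N T) (\<lambda>x. (f x)\<^sup>2)"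
  shows "sq M (\<lambda>x. f (T x))"
  using assms integrable_distr_eq[of T M N "\<lambda>x. (f x)\<^sup>2"] by (auto simp: sq_def)

lemma jensen_nn:
  fixes f :: "'a \<Rightarrow> real"
  assumes "prob_space N" "f \<in> borel_measurable N"
  shows "ennreal ((\<integral>y. f y \<partial>N)\<^sup>2) \<le> (\<integral>\<^sup>+y. ennreal ((f y)\<^sup>2) \<partial>N)"
proof (cases "integrable N (\<lambda>y. (f y)\<^sup>2)")
  case True
  interpret prob_space N by fact
  have fi: "integrable N f" using square_integrable_imp_integrable[OF assms(2) True] .
  define c where "c = (\<integral>y. f y \<partial>N)"
  have "0 \<le> (\<integral>y. (f y - c)\<^sup>2 \<partial>N)" by simp
  also have "(\<integral>y. (f y - c)\<^sup>2 \<partial>N) = (\<integral>y. (f y)\<^sup>2 - 2 * c * f y + c\<^sup>2 \<partial>N)"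
    by (simp add: power2_diff algebra_simps)
  also have "\<dots> = (\<integral>y. (f y)\<^sup>2 \<partial>N) - 2 * c * c + c\<^sup>2"
    using fi True by (simp add: c_def prob_space)
  finally have "c\<^sup>2 \<le> (\<integral>y. (f y)\<^sup>2 \<partial>N)" by (simp add: power2_eq_square)
  then show ?thesis
    using True by (subst nn_integral_eq_integral) (auto simp: c_def)
next
  case False
  have "(\<integral>\<^sup>+y. ennreal ((f y)\<^sup>2) \<partial>N) = \<infinity>"
  proof (rule ccontr)
    assume "(\<integral>\<^sup>+y. ennreal ((f y)\<^sup>2) \<partial>N) \<noteq> \<infinity>"
    then have "integrable N (\<lambda>y. (f y)\<^sup>2)"
      using assms(2) by (intro integrableI_nonneg) (auto simp: top.not_eq_extremum)
    with False show False by simp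
  qed
  then show ?thesis by simp
qed

locale hoeff =
  fixes P :: "'b measure" and s :: "'b list \<Rightarrow> real" and k :: nat
  assumes P: "prob_space P"
  and sym: "\<And>xs ys. length xs = k \<Longrightarrow> mset xs = mset ys \<Longrightarrow> s xs = s ys"
  and smeas: "(\<lambda>y. s (map y [0..<k])) \<in> borel_measurable (PiM {..<k} (\<lambda>_. P))"
  and ssq: "integrable (PiM {..<k} (\<lambda>_. P)) (\<lambda>y. (s (map y [0..<k]))\<^sup>2)"
begin

abbreviation Om :: "nat set \<Rightarrow> (nat \<Rightarrow> 'b) measure" where "Om I \<equiv> PiM I (\<lambda>_. P)"

definition theta where "theta = kernel_mean s P k"

lemma PP_loc: "product_prob_space (\<lambda>_. P)"
  unfolding product_prob_space_def product_prob_space_axioms_def product_sigma_finite_def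
  using P prob_space_imp_sigma_finite by blast

lemma prob_Om: "finite I \<Longrightarrow> prob_space (Om I)"
  by (intro prob_space_PiM P)

lemma fin_Om: "finite I \<Longrightarrow> finite_measure (Om I)"
  using prob_Om prob_space_def by blast

lemma PP_sf: "product_sigma_finite (\<lambda>_. P)"
  using PP_loc product_prob_space_def by blast

definition rho :: "nat list \<Rightarrow> (nat \<Rightarrow> 'b) \<Rightarrow> (nat \<Rightarrow> 'b)" where
  "rho L \<omega> = (\<lambda>j\<in>{..<length L}. \<omega> (L ! j))"

lemma rho_meas: "set L \<subseteq> K \<Longrightarrow> rho L \<in> measurable (Om K) (Om {..<length L})"
  unfolding rho_def by (intro measurable_restrict measurable_component_singleton) auto

lemma map_rho: "map (rho L \<omega>) [0..<length L] = map \<omega> L"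
  by (rule nth_equalityI) (auto simp: rho_def)

lemma distr_rho:
  assumes "distinct L" "set L \<subseteq> K"
  shows "distr (Om K) (Om {..<length L}) (rho L) = Om {..<length L}"
proof -
  have "inj_on ((!) L) {..<length L}" using assms(1) by (simp add: inj_on_def nth_eq_iff_index_eq)
  moreover have "(!) L \<in> {..<length L} \<rightarrow> K" using assms(2) by auto
  ultimately show ?thesis
    using distr_PiM_reindex[of K "\<lambda>_. P" "(!) L" "{..<length L}"] P unfolding rho_def by auto
qed

lemma integral_rho:
  fixes F :: "(nat \<Rightarrow> 'b) \<Rightarrow> real"
  assumes "distinct L" "set L \<subseteq> K" "F \<in> borel_measurable (Om {..<length L})"
  shows "(\<integral>\<omega>. F (rho L \<omega>) \<partial>Om K) = (\<integral>y. F y \<partial>Om {..<length L})"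
proof -
  have "(\<integral>y. F y \<partial>Om {..<length L}) = (\<integral>y. F y \<partial>distr (Om K) (Om {..<length L}) (rho L))"
    using distr_rho[OF assms(1,2)] by simp
  also have "\<dots> = (\<integral>\<omega>. F (rho L \<omega>) \<partial>Om K)"
    by (rule integral_distr[OF rho_meas[OF assms(2)] assms(3)])
  finally show ?thesis by simp
qed

lemma sq_rho:
  fixes F :: "(nat \<Rightarrow> 'b) \<Rightarrow> real"
  assumes "distinct L" "set L \<subseteq> K" "F \<in> borel_measurable (Om {..<length L})"
    "integrable (Om {..<length L}) (\<lambda>y. (F y)\<^sup>2)"
  shows "sq (Om K) (\<lambda>\<omega>. F (rho L \<omega>))"
  by (rule sq_distr[OF rho_meas[OF assms(2)] assms(3)]) (simp add: distr_rho[OF assms(1,2)] assms(4))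

lemma s_list_sq:
  assumes "distinct L" "length L = k" "set L \<subseteq> K"
  shows "sq (Om K) (\<lambda>\<omega>. s (map \<omega> L))"
proof -
  have "sq (Om K) (\<lambda>\<omega>. (\<lambda>y. s (map y [0..<k])) (rho L \<omega>))"
    using sq_rho[OF assms(1,3), of "\<lambda>y. s (map y [0..<k])"] smeas ssq assms(2) by simp
  then show ?thesis using map_rho[of L] assms(2) by simp
qed

lemma s_list_integral:
  assumes "distinct L" "length L = k" "set L \<subseteq> K"
  shows "(\<integral>\<omega>. s (map \<omega> L) \<partial>Om K) = theta"
proof -
  have "(\<integral>\<omega>. (\<lambda>y. s (map y [0..<k])) (rho L \<omega>) \<partial>Om K) = (\<integral>y. s (map y [0..<k]) \<partial>Om {..<k})"
    using integral_rho[OF assms(1,3), of "\<lambda>y. s (map y [0..<k])"] smeas assms(2) by simp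
  then show ?thesis using map_rho[of L] assms(2) by (simp add: theta_def kernel_mean_def)
qed

lemma s_append_meas:
  assumes "set u \<subseteq> space P" "length u + m = k"
  shows "(\<lambda>y. s (u @ map y [0..<m])) \<in> borel_measurable (Om {..<m})"
proof -
  define tau where "tau = (\<lambda>y. \<lambda>j\<in>{..<k}. (u @ map y [0..<m]) ! j)"
  have "tau \<in> measurable (Om {..<m}) (Om {..<k})"
    unfolding tau_def
  proof (intro measurable_restrict)
    fix j assume j: "j \<in> {..<k}"
    show "(\<lambda>y. (u @ map y [0..<m]) ! j) \<in> measurable (Om {..<m}) P"
    proof (cases "j < length u")
      case True
      then have "u ! j \<in> space P" using assms(1) by auto
      then show ?thesis using True by (simp add: nth_append)
    next
      case False
      then have "(\<lambda>y. (u @ map y [0..<m]) ! j) = (\<lambda>y. y (j - length u))"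
        using j assms(2) by (auto simp: nth_append)
      then show ?thesis using False j assms(2)
        by (simp add: measurable_component_singleton)
    qed
  qed
  moreover have "\<And>y. map (tau y) [0..<k] = u @ map y [0..<m]"
    unfolding tau_def using assms(2) by (intro nth_equalityI) auto
  ultimately show ?thesis
    using measurable_comp[OF _ smeas, of tau] by (simp add: comp_def)
qed

lemma G1:
  assumes "finite I" "finite E" "I \<inter> E = {}" "U \<subseteq> I" "distinct l" "set l = E"
    "card U + length l = k" "\<omega> \<in> space (Om I)"
  shows "hsc s P k (map \<omega> (sorted_list_of_set U)) =
    (\<integral>z. s (map (merge I E (\<omega>, z)) (sorted_list_of_set U @ l)) \<partial>Om E) - theta"
proof -
  have fU: "finite U" using assms(1,4) finite_subset by blast
  define u where "u = map \<omega> (sorted_list_of_set U)"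
  have lu: "length u = card U" using fU by (simp add: u_def)
  have su: "set u \<subseteq> space P" using assms(4,8) fU by (auto simp: u_def space_PiM)
  have m: "k - length u = length l" using lu assms(7) by simp
  have "(\<integral>z. s (map (merge I E (\<omega>, z)) (sorted_list_of_set U @ l)) \<partial>Om E)
      = (\<integral>z. (\<lambda>y. s (u @ map y [0..<length l])) (rho l z) \<partial>Om E)"
  proof (rule Bochner_Integration.integral_cong[OF refl])
    fix z assume "z \<in> space (Om E)"
    have h1: "map (merge I E (\<omega>, z)) (sorted_list_of_set U) = u"
      using assms(4) fU by (auto simp: u_def merge_def)
    have h2: "map (merge I E (\<omega>, z)) l = map z l"
      using assms(3,6) by (auto simp: merge_def)
    show "s (map (merge I E (\<omega>, z)) (sorted_list_of_set U @ l)) =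
        (\<lambda>y. s (u @ map y [0..<length l])) (rho l z)"
      unfolding map_append h1 h2 map_rho by simp
  qed
  also have "\<dots> = (\<integral>y. s (u @ map y [0..<length l]) \<partial>Om {..<length l})"
    by (rule integral_rho[OF assms(5)]) (use assms(6) s_append_meas[OF su] lu assms(7) in auto)
  finally show ?thesis unfolding hsc_def u_def[symmetric] theta_def m by simp
qed

end

context hoeff begin

lemma restrict_merge:
  assumes "\<omega> \<in> space (Om A)"
  shows "restrict (merge A B (\<omega>, z)) A = \<omega>"
  using assms by (auto simp: merge_def space_PiM PiE_def extensional_def fun_eq_iff)

lemma distr_restr:
  assumes "J \<subseteq> K" "finite K"
  shows "distr (Om K) (Om J) (\<lambda>f. restrict f J) = Om J"
  using product_prob_space.distr_restrict[OF PP_loc assms] by simp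

lemma restr_meas: "J \<subseteq> K \<Longrightarrow> (\<lambda>f. restrict f J) \<in> measurable (Om K) (Om J)"
  by (rule measurable_restrict_subset)

lemma sq_restr:
  assumes "J \<subseteq> K" "finite K" "sq (Om J) g"
  shows "sq (Om K) (\<lambda>w. g (restrict w J))"
  using sq_distr[OF restr_meas[OF assms(1)], of g] assms distr_restr[OF assms(1,2)]
  by (auto simp: sq_def)

lemma integral_restr:
  fixes g :: "_ \<Rightarrow> real"
  assumes "J \<subseteq> K" "finite K" "g \<in> borel_measurable (Om J)"
  shows "(\<integral>w. g (restrict w J) \<partial>Om K) = (\<integral>w. g w \<partial>Om J)"
  using integral_distr[OF restr_meas[OF assms(1)] assms(3)] distr_restr[OF assms(1,2)] by simp

lemma merge_meas:
  fixes h :: "_ \<Rightarrow> real"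
  assumes "h \<in> borel_measurable (Om (A \<union> B))"
  shows "(\<lambda>(\<omega>, z). h (merge A B (\<omega>, z))) \<in> borel_measurable (Om A \<Otimes>\<^sub>M Om B)"
  using measurable_comp[OF measurable_merge assms] by (simp add: comp_def case_prod_beta')

lemma cond_meas:
  fixes h :: "_ \<Rightarrow> real"
  assumes "finite B" "h \<in> borel_measurable (Om (A \<union> B))"
  shows "(\<lambda>\<omega>. \<integral>z. h (merge A B (\<omega>, z)) \<partial>Om B) \<in> borel_measurable (Om A)"
proof -
  interpret sigma_finite_measure "Om B"
    using prob_Om[OF assms(1)] prob_space_imp_sigma_finite by blast
  show ?thesis
    by (rule borel_measurable_lebesgue_integral[where f="\<lambda>\<omega> z. h (merge A B (\<omega>, z))"])
       (use merge_meas[OF assms(2)] in simp)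
qed

lemma cond_fold:
  assumes "finite A" "finite B" "A \<inter> B = {}" "sq (Om (A \<union> B)) h" "sq (Om A) g"
  shows "(\<integral>\<omega>. (\<integral>z. h (merge A B (\<omega>, z)) \<partial>Om B) * g \<omega> \<partial>Om A) =
         (\<integral>w. h w * g (restrict w A) \<partial>Om (A \<union> B))"
proof -
  have fAB: "finite (A \<union> B)" using assms by simp
  have sg: "sq (Om (A \<union> B)) (\<lambda>w. g (restrict w A))"
    by (rule sq_restr[OF _ fAB assms(5)]) auto
  have int: "integrable (Om (A \<union> B)) (\<lambda>w. h w * g (restrict w A))"
    by (rule sq_mult_integrable[OF assms(4) sg])
  have "(\<integral>w. h w * g (restrict w A) \<partial>Om (A \<union> B)) =
      (\<integral>\<omega>. (\<integral>z. h (merge A B (\<omega>, z)) * g (restrict (merge A B (\<omega>, z)) A) \<partial>Om B) \<partial>Om A)"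
    using product_sigma_finite.product_integral_fold[OF PP_sf assms(3) assms(1,2) int] by simp
  also have "\<dots> = (\<integral>\<omega>. (\<integral>z. h (merge A B (\<omega>, z)) \<partial>Om B) * g \<omega> \<partial>Om A)"
  proof (rule Bochner_Integration.integral_cong[OF refl])
    fix \<omega> assume "\<omega> \<in> space (Om A)"
    then show "(\<integral>z. h (merge A B (\<omega>, z)) * g (restrict (merge A B (\<omega>, z)) A) \<partial>Om B) =
        (\<integral>z. h (merge A B (\<omega>, z)) \<partial>Om B) * g \<omega>"
      by (simp add: restrict_merge)
  qed
  finally show ?thesis by simp
qed

lemma sq_cond:
  assumes "finite A" "finite B" "A \<inter> B = {}" "sq (Om (A \<union> B)) h"
  shows "sq (Om A) (\<lambda>\<omega>. \<integral>z. h (merge A B (\<omega>, z)) \<partial>Om B)"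
proof -
  have hm: "h \<in> borel_measurable (Om (A \<union> B))" using assms(4) by (simp add: sq_def)
  have m: "(\<lambda>\<omega>. \<integral>z. h (merge A B (\<omega>, z)) \<partial>Om B) \<in> borel_measurable (Om A)"
    by (rule cond_meas[OF assms(2) hm])
  have "(\<integral>\<^sup>+\<omega>. ennreal ((\<integral>z. h (merge A B (\<omega>, z)) \<partial>Om B)\<^sup>2) \<partial>Om A)
      \<le> (\<integral>\<^sup>+\<omega>. (\<integral>\<^sup>+z. ennreal ((h (merge A B (\<omega>, z)))\<^sup>2) \<partial>Om B) \<partial>Om A)"
  proof (rule nn_integral_mono)
    fix \<omega> assume "\<omega> \<in> space (Om A)"
    then have "(\<lambda>z. h (merge A B (\<omega>, z))) \<in> borel_measurable (Om B)"
      using measurable_Pair2[OF merge_meas[OF hm]] by simp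
    then show "ennreal ((\<integral>z. h (merge A B (\<omega>, z)) \<partial>Om B)\<^sup>2)
        \<le> (\<integral>\<^sup>+z. ennreal ((h (merge A B (\<omega>, z)))\<^sup>2) \<partial>Om B)"
      by (rule jensen_nn[OF prob_Om[OF assms(2)]])
  qed
  also have "\<dots> = (\<integral>\<^sup>+w. ennreal ((h w)\<^sup>2) \<partial>Om (A \<union> B))"
    by (rule product_sigma_finite.product_nn_integral_fold[OF PP_sf assms(3) assms(1,2), symmetric])
       (use hm in simp)
  also have "\<dots> < \<infinity>"
    using assms(4) unfolding sq_def integrable_iff_bounded by simp
  finally have "(\<integral>\<^sup>+\<omega>. ennreal (norm ((\<integral>z. h (merge A B (\<omega>, z)) \<partial>Om B)\<^sup>2)) \<partial>Om A) < \<infinity>"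
    by simp
  then show ?thesis using m unfolding sq_def integrable_iff_bounded by simp
qed

end

lemma nths_sorted_list:
  assumes "finite T" "B \<subseteq> {..<card T}"
  shows "nths (sorted_list_of_set T) B = sorted_list_of_set ((!) (sorted_list_of_set T) ` B)"
proof (rule sorted_distinct_set_unique)
  let ?L = "sorted_list_of_set T"
  show "sorted (nths ?L B)" by (simp add: sorted_nths)
  show "distinct (nths ?L B)" by simp
  have "finite ((!) ?L ` B)" using assms(2) finite_subset by blast
  moreover have "set (nths ?L B) = (!) ?L ` B"
    using assms by (auto simp: set_nths)
  ultimately show "set (nths ?L B) = set (sorted_list_of_set ((!) ?L ` B))" by simp
qed auto

lemma bij_sub:
  assumes "bij_betw f X T"
  shows "bij_betw (image f) {B. B \<subseteq> X \<and> B \<noteq> {} \<and> B \<noteq> X} {A. A \<subseteq> T \<and> A \<noteq> {} \<and> A \<noteq> T}"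
proof (rule bij_betw_subset[OF bij_betw_Pow[OF assms]])
  show "{B. B \<subseteq> X \<and> B \<noteq> {} \<and> B \<noteq> X} \<subseteq> Pow X" by auto
  have inj: "inj_on (image f) (Pow X)" using bij_betw_Pow[OF assms] bij_betw_imp_inj_on by blast
  have fX: "f ` X = T" using assms bij_betw_imp_surj_on by blast
  show "image f ` {B. B \<subseteq> X \<and> B \<noteq> {} \<and> B \<noteq> X} = {A. A \<subseteq> T \<and> A \<noteq> {} \<and> A \<noteq> T}"
  proof (intro equalityI subsetI)
    fix A assume "A \<in> image f ` {B. B \<subseteq> X \<and> B \<noteq> {} \<and> B \<noteq> X}"
    then obtain B where B: "B \<subseteq> X" "B \<noteq> {}" "B \<noteq> X" "A = f ` B" by auto
    have "f ` B \<noteq> T" using B fX inj_onD[OF inj, of B X] by auto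
    then show "A \<in> {A. A \<subseteq> T \<and> A \<noteq> {} \<and> A \<noteq> T}" using B fX by auto
  next
    fix A assume "A \<in> {A. A \<subseteq> T \<and> A \<noteq> {} \<and> A \<noteq> T}"
    then have A: "A \<subseteq> T" "A \<noteq> {}" "A \<noteq> T" by auto
    then have "A \<in> image f ` Pow X" using bij_betw_Pow[OF assms] by (auto simp: bij_betw_def)
    then obtain B where B: "B \<subseteq> X" "A = f ` B" by auto
    have "B \<noteq> {}" "B \<noteq> X" using A B fX by auto
    then show "A \<in> image f ` {B. B \<subseteq> X \<and> B \<noteq> {} \<and> B \<noteq> X}"
      using B by (intro image_eqI[of _ _ B]) auto
  qed
qed

context hoeff begin

definition Gf :: "nat set \<Rightarrow> (nat \<Rightarrow> 'b) \<Rightarrow> real" where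
  "Gf T \<omega> = hsc s P k (map \<omega> (sorted_list_of_set T))"
definition Hf :: "nat set \<Rightarrow> (nat \<Rightarrow> 'b) \<Rightarrow> real" where
  "Hf T \<omega> = hterm s P k (map \<omega> (sorted_list_of_set T))"

lemma Hf_rec:
  assumes "finite T"
  shows "Hf T \<omega> = Gf T \<omega> - (\<Sum>A\<in>{A. A \<subseteq> T \<and> A \<noteq> {} \<and> A \<noteq> T}. Hf A \<omega>)"
proof -
  let ?L = "sorted_list_of_set T"
  let ?t = "card T"
  have len: "length (map \<omega> ?L) = ?t" using assms by simp
  have bij: "bij_betw ((!) ?L) {..<?t} T"
    by (rule bij_betw_nth) (use assms in auto)
  have "(\<Sum>B\<in>{B. B \<subseteq> {..<?t} \<and> B \<noteq> {} \<and> B \<noteq> {..<?t}}. hterm s P k (nths (map \<omega> ?L) B))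
      = (\<Sum>B\<in>{B. B \<subseteq> {..<?t} \<and> B \<noteq> {} \<and> B \<noteq> {..<?t}}. Hf ((!) ?L ` B) \<omega>)"
    by (rule sum.cong[OF refl]) (use assms in \<open>simp add: nths_map nths_sorted_list Hf_def\<close>)
  also have "\<dots> = (\<Sum>A\<in>{A. A \<subseteq> T \<and> A \<noteq> {} \<and> A \<noteq> T}. Hf A \<omega>)"
    by (rule sum.reindex_bij_betw[OF bij_sub[OF bij]])
  finally show ?thesis
    unfolding Hf_def[of T] Gf_def using hterm.simps[of s P k "map \<omega> ?L"] len by simp
qed

lemma Gf_empty: "Gf {} \<omega> = 0"
  by (simp add: Gf_def hsc_def kernel_mean_def)

lemma Gf_sum:
  assumes "finite T"
  shows "Gf T \<omega> = (\<Sum>A\<in>{A. A \<subseteq> T \<and> A \<noteq> {}}. Hf A \<omega>)"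
proof (cases "T = {}")
  case True then show ?thesis by (simp add: Gf_empty)
next
  case False
  have e: "{A. A \<subseteq> T \<and> A \<noteq> {}} = insert T {A. A \<subseteq> T \<and> A \<noteq> {} \<and> A \<noteq> T}" using False by auto
  have f: "finite {A. A \<subseteq> T \<and> A \<noteq> {} \<and> A \<noteq> T}" using assms by auto
  show ?thesis unfolding e using Hf_rec[OF assms, of \<omega>] f by (simp add: sum.insert)
qed

lemma Gf_full:
  assumes "finite T" "card T = k"
  shows "Gf T \<omega> = s (map \<omega> (sorted_list_of_set T)) - theta"
proof -
  interpret p0: prob_space "Om {}" using prob_Om[of "{}"] by simp
  show ?thesis using assms by (simp add: Gf_def hsc_def theta_def p0.prob_space)
qed

lemma Hf_upd: "i \<notin> T \<Longrightarrow> finite T \<Longrightarrow> Hf T (fun_upd \<omega> i x) = Hf T \<omega>"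
  unfolding Hf_def by (intro arg_cong[where f="hterm s P k"]) auto

lemma fresh:
  fixes I :: "nat set"
  assumes "finite I"
  shows "\<exists>E l. finite E \<and> I \<inter> E = {} \<and> distinct l \<and> set l = E \<and> length l = m"
proof -
  define N where "N = Suc (Max (insert 0 I))"
  have "\<forall>i\<in>I. i < N" using assms by (auto simp: N_def less_Suc_eq_le)
  then show ?thesis
    by (intro exI[of _ "{N..<N+m}"] exI[of _ "[N..<N+m]"]) auto
qed

lemma Gf_repr:
  assumes "finite I" "T \<subseteq> I" "card T \<le> k"
  obtains E l where "finite E" "I \<inter> E = {}" "distinct l" "set l = E" "card T + length l = k"
    "\<And>\<omega>. \<omega> \<in> space (Om I) \<Longrightarrow> Gf T \<omega> =
       (\<integral>z. s (map (merge I E (\<omega>, z)) (sorted_list_of_set T @ l)) \<partial>Om E) - theta"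
    "sq (Om (I \<union> E)) (\<lambda>w. s (map w (sorted_list_of_set T @ l)))"
proof -
  obtain E l where El: "finite E" "I \<inter> E = {}" "distinct l" "set l = E" "length l = k - card T"
    using fresh[OF assms(1)] by blast
  have fT: "finite T" using assms finite_subset by blast
  have ck: "card T + length l = k" using El assms(3) by simp
  have "sq (Om (I \<union> E)) (\<lambda>w. s (map w (sorted_list_of_set T @ l)))"
    by (rule s_list_sq) (use El assms fT ck in auto)
  then show ?thesis
    using that[OF El(1-4) ck] G1[OF assms(1) El(1) El(2) assms(2) El(3) El(4) ck] unfolding Gf_def
    by blast
qed

lemma sq_Gf:
  assumes "finite I" "T \<subseteq> I" "card T \<le> k"
  shows "sq (Om I) (Gf T)"
proof -
  obtain E l where El: "finite E" "I \<inter> E = {}" "distinct l" "set l = E" "card T + length l = k"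
    and G: "\<And>\<omega>. \<omega> \<in> space (Om I) \<Longrightarrow> Gf T \<omega> =
       (\<integral>z. s (map (merge I E (\<omega>, z)) (sorted_list_of_set T @ l)) \<partial>Om E) - theta"
    and S: "sq (Om (I \<union> E)) (\<lambda>w. s (map w (sorted_list_of_set T @ l)))"
    using Gf_repr[OF assms] by metis
  have "sq (Om I) (\<lambda>\<omega>. (\<integral>z. s (map (merge I E (\<omega>, z)) (sorted_list_of_set T @ l)) \<partial>Om E) - theta)"
    by (rule sq_diff[OF sq_cond[OF assms(1) El(1,2) S] sq_const[OF fin_Om[OF assms(1)]]])
  then show ?thesis by (rule sq_cong) (simp add: G)
qed

lemma sq_Hf:
  assumes "finite I" "T \<subseteq> I" "card T \<le> k"
  shows "sq (Om I) (Hf T)"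
  using assms
proof (induction "card T" arbitrary: T rule: less_induct)
  case less
  have fT: "finite T" using less.prems finite_subset by blast
  have "sq (Om I) (\<lambda>\<omega>. Gf T \<omega> - (\<Sum>A\<in>{A. A \<subseteq> T \<and> A \<noteq> {} \<and> A \<noteq> T}. Hf A \<omega>))"
  proof (rule sq_diff[OF sq_Gf[OF less.prems] sq_sum[OF fin_Om[OF assms(1)]]])
    fix A assume A: "A \<in> {A. A \<subseteq> T \<and> A \<noteq> {} \<and> A \<noteq> T}"
    then have "card A < card T" using fT by (auto intro: psubset_card_mono)
    then show "sq (Om I) (Hf A)" using less A by auto
  qed
  then show ?case by (rule sq_cong) (simp add: Hf_rec[OF fT])
qed

end

context hoeff begin

lemma s_move:
  fixes T :: "nat set"
  assumes "finite T" "i \<in> T" "card T + length l = k"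
  shows "s (map w (sorted_list_of_set (T - {i}) @ i # l)) = s (map w (sorted_list_of_set T @ l))"
proof -
  have "mset_set T = add_mset i (mset_set (T - {i}))"
    using assms(1,2) by (metis insert_Diff finite_Diff finite_insert mset_set.insert Diff_iff insertI1 mset_set.remove)
  moreover have ms: "mset (sorted_list_of_set X) = mset_set X" for X :: "nat set"
    by (metis mset_sorted_list_of_multiset sorted_list_of_mset_set)
  moreover have sw: "\<And>A B. A + add_mset i B = add_mset i A + (B :: nat multiset)" by simp
  ultimately have "mset (sorted_list_of_set (T - {i}) @ i # l) = mset (sorted_list_of_set T @ l)"
    by (simp only: mset_append mset.simps ms)
  then have "mset (map w (sorted_list_of_set (T - {i}) @ i # l)) = mset (map w (sorted_list_of_set T @ l))"
    by (metis mset_map)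
  moreover have "length (map w (sorted_list_of_set T @ l)) = k" using assms by simp
  ultimately show ?thesis using sym by metis
qed

definition indep_i :: "nat set \<Rightarrow> nat \<Rightarrow> ((nat \<Rightarrow> 'b) \<Rightarrow> real) \<Rightarrow> bool" where
  "indep_i I i g \<longleftrightarrow> (\<forall>\<omega>\<in>space (Om I). \<forall>x\<in>space P. g ((fun_upd \<omega> i x)) = g \<omega>)"

lemma Gf_step:
  assumes I: "finite I" and T: "T \<subseteq> I" "i \<in> T" "card T \<le> k" and g: "sq (Om I) g" "indep_i I i g"
  shows "(\<integral>\<omega>. Gf T \<omega> * g \<omega> \<partial>Om I) = (\<integral>\<omega>. Gf (T - {i}) \<omega> * g \<omega> \<partial>Om I)"
proof -
  have fT: "finite T" using I T finite_subset by blast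
  have iI: "i \<in> I" using T by auto
  obtain E l where El: "finite E" "I \<inter> E = {}" "distinct l" "set l = E" "card T + length l = k"
    and G: "\<And>\<omega>. \<omega> \<in> space (Om I) \<Longrightarrow> Gf T \<omega> =
       (\<integral>z. s (map (merge I E (\<omega>, z)) (sorted_list_of_set T @ l)) \<partial>Om E) - theta"
    and S: "sq (Om (I \<union> E)) (\<lambda>w. s (map w (sorted_list_of_set T @ l)))"
    using Gf_repr[OF I T(1) T(3)] by metis
  define Sf where "Sf = (\<lambda>w. s (map w (sorted_list_of_set T @ l)))"
  define Aq where "Aq = (\<lambda>\<omega>. \<integral>z. Sf (merge I E (\<omega>, z)) \<partial>Om E)"
  define I' where "I' = I - {i}"
  define E' where "E' = insert i E"
  have fI': "finite I'" "finite E'" using I El by (auto simp: I'_def E'_def)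
  have dI': "I' \<inter> E' = {}" using El iI by (auto simp: I'_def E'_def)
  have uI': "I' \<union> E' = I \<union> E" using iI by (auto simp: I'_def E'_def)
  define Aq' where "Aq' = (\<lambda>\<omega>. \<integral>z. Sf (merge I' E' (\<omega>, z)) \<partial>Om E')"
  have SfK: "sq (Om (I \<union> E)) Sf" using S by (simp add: Sf_def)
  have SfK': "sq (Om (I' \<union> E')) Sf" using SfK uI' by simp
  have sqAq: "sq (Om I) Aq" unfolding Aq_def by (rule sq_cond[OF I El(1,2) SfK])
  have sqAq': "sq (Om I') Aq'" unfolding Aq'_def by (rule sq_cond[OF fI' dI' SfK'])
  have fin: "finite_measure (Om I)" "finite_measure (Om I')" using fin_Om I fI' by auto
  obtain x0 where x0: "x0 \<in> space P" using prob_space.not_empty[OF P] by blast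
  define gh where "gh = (\<lambda>\<omega>'. g ((fun_upd \<omega>' i x0)))"
  have gh_restr: "gh (restrict \<omega> I') = g \<omega>" if "\<omega> \<in> space (Om I)" for \<omega>
  proof -
    have "fun_upd (restrict \<omega> I') i x0 = (fun_upd \<omega> i x0)"
      using that by (auto simp: I'_def space_PiM PiE_def extensional_def fun_eq_iff)
    then show ?thesis using g(2) that x0 by (simp add: gh_def indep_i_def)
  qed
  have upd_meas: "(\<lambda>\<omega>'. (fun_upd \<omega>' i x0)) \<in> measurable (Om I') (Om I)"
  proof -
    have "(\<lambda>\<omega>'. \<lambda>j\<in>I. if j = i then x0 else \<omega>' j) \<in> measurable (Om I') (Om I)"
    proof (rule measurable_restrict)
      fix j assume "j \<in> I"
      then show "(\<lambda>\<omega>'. if j = i then x0 else \<omega>' j) \<in> measurable (Om I') P"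
        using x0 by (cases "j = i") (auto simp: I'_def intro: measurable_component_singleton)
    qed
    moreover have "(\<lambda>j\<in>I. if j = i then x0 else \<omega>' j) = (fun_upd \<omega>' i x0)" if "\<omega>' \<in> space (Om I')" for \<omega>'
      using that iI by (auto simp: I'_def space_PiM PiE_def extensional_def fun_eq_iff)
    ultimately show ?thesis using measurable_cong[of "Om I'"] by (smt (verit))
  qed
  have gm: "g \<in> borel_measurable (Om I)" using g(1) by (simp add: sq_def)
  have ghm: "gh \<in> borel_measurable (Om I')"
    unfolding gh_def using measurable_comp[OF upd_meas gm] by (simp add: comp_def)
  have sqgh: "sq (Om I') gh"
  proof -
    have "integrable (Om I) (\<lambda>\<omega>. (gh (restrict \<omega> I'))\<^sup>2)"
      using g(1) gh_restr unfolding sq_def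
      by (subst Bochner_Integration.integrable_cong[OF refl, where g="\<lambda>\<omega>. (g \<omega>)\<^sup>2"]) auto
    then have "integrable (distr (Om I) (Om I') (\<lambda>\<omega>. restrict \<omega> I')) (\<lambda>\<omega>. (gh \<omega>)\<^sup>2)"
      using ghm by (subst integrable_distr_eq[OF restr_meas]) (auto simp: I'_def)
    then show ?thesis using ghm distr_restr[of I' I] I by (simp add: sq_def I'_def)
  qed
  have int_g: "(\<integral>\<omega>. gh \<omega> \<partial>Om I') = (\<integral>\<omega>. g \<omega> \<partial>Om I)"
  proof -
    have "(\<integral>\<omega>. gh \<omega> \<partial>Om I') = (\<integral>\<omega>. gh (restrict \<omega> I') \<partial>Om I)"
      by (rule integral_restr[symmetric]) (use I ghm in \<open>auto simp: I'_def\<close>)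
    also have "\<dots> = (\<integral>\<omega>. g \<omega> \<partial>Om I)"
      by (rule Bochner_Integration.integral_cong) (auto simp: gh_restr)
    finally show ?thesis .
  qed
  have "(\<integral>\<omega>. Gf T \<omega> * g \<omega> \<partial>Om I) = (\<integral>\<omega>. Aq \<omega> * g \<omega> - theta * g \<omega> \<partial>Om I)"
    by (rule Bochner_Integration.integral_cong) (auto simp: G Aq_def Sf_def algebra_simps)
  also have "\<dots> = (\<integral>\<omega>. Aq \<omega> * g \<omega> \<partial>Om I) - theta * (\<integral>\<omega>. g \<omega> \<partial>Om I)"
    using sq_mult_integrable[OF sqAq g(1)] sq_integrable[OF fin(1) g(1)] by simp
  also have "(\<integral>\<omega>. Aq \<omega> * g \<omega> \<partial>Om I) = (\<integral>w. Sf w * g (restrict w I) \<partial>Om (I \<union> E))"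
    unfolding Aq_def by (rule cond_fold[OF I El(1,2) SfK g(1)])
  finally have L: "(\<integral>\<omega>. Gf T \<omega> * g \<omega> \<partial>Om I) =
     (\<integral>w. Sf w * g (restrict w I) \<partial>Om (I \<union> E)) - theta * (\<integral>\<omega>. g \<omega> \<partial>Om I)" .
  have G': "Gf (T - {i}) \<omega>' = Aq' \<omega>' - theta" if "\<omega>' \<in> space (Om I')" for \<omega>'
  proof -
    have "0 < card T" using fT T(2) by (auto simp: card_gt_0_iff)
    moreover have "card (T - {i}) = card T - 1" using T(2) by (rule card_Diff_singleton)
    ultimately have c: "card (T - {i}) + length (i # l) = k" using El(5) by auto
    have d: "distinct (i # l)" using El iI by auto
    have "Gf (T - {i}) \<omega>' = (\<integral>z. s (map (merge I' E' (\<omega>', z)) (sorted_list_of_set (T - {i}) @ i # l)) \<partial>Om E') - theta"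
      unfolding Gf_def
      by (rule G1[OF fI'(1) fI'(2) dI' _ d _ c that]) (use T El in \<open>auto simp: I'_def E'_def\<close>)
    also have "\<dots> = Aq' \<omega>' - theta"
      unfolding Aq'_def Sf_def using s_move[OF fT T(2) El(5)] by simp
    finally show ?thesis .
  qed
  have Gr: "Gf (T - {i}) \<omega> = Gf (T - {i}) (restrict \<omega> I')" for \<omega>
    unfolding Gf_def using fT T by (intro arg_cong[where f="hsc s P k"]) (auto simp: I'_def)
  have "(\<integral>\<omega>. Gf (T - {i}) \<omega> * g \<omega> \<partial>Om I) =
        (\<integral>\<omega>. (\<lambda>\<omega>'. (Aq' \<omega>' - theta) * gh \<omega>') (restrict \<omega> I') \<partial>Om I)"
  proof (rule Bochner_Integration.integral_cong[OF refl])
    fix \<omega> assume w: "\<omega> \<in> space (Om I)"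
    then have "restrict \<omega> I' \<in> space (Om I')" by (auto simp: space_PiM I'_def)
    then show "Gf (T - {i}) \<omega> * g \<omega> = (\<lambda>\<omega>'. (Aq' \<omega>' - theta) * gh \<omega>') (restrict \<omega> I')"
      using Gr[of \<omega>] G' gh_restr[OF w] by simp
  qed
  also have "\<dots> = (\<integral>\<omega>'. (Aq' \<omega>' - theta) * gh \<omega>' \<partial>Om I')"
    by (rule integral_restr) (use I sqAq' ghm in \<open>auto simp: I'_def sq_def\<close>)
  also have "\<dots> = (\<integral>\<omega>'. Aq' \<omega>' * gh \<omega>' - theta * gh \<omega>' \<partial>Om I')"
    by (simp add: algebra_simps)
  also have "\<dots> = (\<integral>\<omega>'. Aq' \<omega>' * gh \<omega>' \<partial>Om I') - theta * (\<integral>\<omega>'. gh \<omega>' \<partial>Om I')"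
    using sq_mult_integrable[OF sqAq' sqgh] sq_integrable[OF fin(2) sqgh] by simp
  also have "(\<integral>\<omega>'. Aq' \<omega>' * gh \<omega>' \<partial>Om I') = (\<integral>w. Sf w * gh (restrict w I') \<partial>Om (I' \<union> E'))"
    unfolding Aq'_def by (rule cond_fold[OF fI' dI' SfK' sqgh])
  also have "\<dots> = (\<integral>w. Sf w * g (restrict w I) \<partial>Om (I \<union> E))"
  proof (subst uI', rule Bochner_Integration.integral_cong[OF refl])
    fix w assume "w \<in> space (Om (I \<union> E))"
    then have "restrict w I \<in> space (Om I)" by (auto simp: space_PiM)
    moreover have "restrict (restrict w I) I' = restrict w I'" by (auto simp: I'_def)
    ultimately show "Sf w * gh (restrict w I') = Sf w * g (restrict w I)"
      using gh_restr by metis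
  qed
  finally show ?thesis using L int_g by simp
qed

lemma Hf_degen:
  assumes I: "finite I" and T: "T \<subseteq> I" "i \<in> T" "card T \<le> k" and g: "sq (Om I) g" "indep_i I i g"
  shows "(\<integral>\<omega>. Hf T \<omega> * g \<omega> \<partial>Om I) = 0"
  using T
proof (induction "card T" arbitrary: T rule: less_induct)
  case less
  have fT: "finite T" using less.prems I finite_subset by blast
  define Ai where "Ai = {A. A \<subseteq> T \<and> A \<noteq> {} \<and> A \<noteq> T \<and> i \<in> A}"
  define An where "An = {A. A \<subseteq> T - {i} \<and> A \<noteq> {}}"
  have split: "{A. A \<subseteq> T \<and> A \<noteq> {} \<and> A \<noteq> T} = Ai \<union> An" "Ai \<inter> An = {}"
    using less.prems by (auto simp: Ai_def An_def)
  have finA: "finite Ai" "finite An" using fT by (auto simp: Ai_def An_def)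
  have pw: "Hf T \<omega> = Gf T \<omega> - Gf (T - {i}) \<omega> - (\<Sum>A\<in>Ai. Hf A \<omega>)" for \<omega>
  proof -
    have "(\<Sum>A\<in>Ai \<union> An. Hf A \<omega>) = (\<Sum>A\<in>Ai. Hf A \<omega>) + (\<Sum>A\<in>An. Hf A \<omega>)"
      by (rule sum.union_disjoint[OF finA split(2)])
    moreover have "Gf (T - {i}) \<omega> = (\<Sum>A\<in>An. Hf A \<omega>)"
      unfolding An_def by (rule Gf_sum) (use fT in simp)
    moreover have "(\<Sum>A\<in>{A. A \<subseteq> T \<and> A \<noteq> {} \<and> A \<noteq> T}. Hf A \<omega>) = (\<Sum>A\<in>Ai \<union> An. Hf A \<omega>)"
      unfolding split(1) ..
    ultimately show ?thesis using Hf_rec[OF fT, of \<omega>] by linarith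
  qed
  have sAi: "A \<subseteq> I" "card A \<le> k" "card A < card T" if "A \<in> Ai" for A
    using that less.prems fT by (auto simp: Ai_def intro: psubset_card_mono card_mono order.trans)
  have sqT: "sq (Om I) (Gf T)" "sq (Om I) (Gf (T - {i}))"
  proof -
    have "card (T - {i}) \<le> card T" using fT by (simp add: card_mono)
    moreover have "T - {i} \<subseteq> I" using less.prems by auto
    ultimately show "sq (Om I) (Gf T)" "sq (Om I) (Gf (T - {i}))"
      using sq_Gf[OF I, of T] sq_Gf[OF I, of "T - {i}"] less.prems by simp_all
  qed
  have sqA: "sq (Om I) (Hf A)" if "A \<in> Ai" for A using sq_Hf[OF I sAi(1,2)[OF that]] .
  have "(\<integral>\<omega>. Hf T \<omega> * g \<omega> \<partial>Om I) =
      (\<integral>\<omega>. Gf T \<omega> * g \<omega> - Gf (T - {i}) \<omega> * g \<omega> - (\<Sum>A\<in>Ai. Hf A \<omega> * g \<omega>) \<partial>Om I)"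
    by (intro Bochner_Integration.integral_cong refl) (simp add: pw left_diff_distrib sum_distrib_right)
  also have "\<dots> = (\<integral>\<omega>. Gf T \<omega> * g \<omega> \<partial>Om I) - (\<integral>\<omega>. Gf (T - {i}) \<omega> * g \<omega> \<partial>Om I)
      - (\<Sum>A\<in>Ai. \<integral>\<omega>. Hf A \<omega> * g \<omega> \<partial>Om I)"
    using sq_mult_integrable[OF sqT(1) g(1)] sq_mult_integrable[OF sqT(2) g(1)]
      sq_mult_integrable[OF sqA g(1)]
    by (simp add: Bochner_Integration.integral_diff Bochner_Integration.integral_sum)
  also have "(\<Sum>A\<in>Ai. \<integral>\<omega>. Hf A \<omega> * g \<omega> \<partial>Om I) = 0"
    using less.hyps sAi by (intro sum.neutral) (auto simp: Ai_def)
  finally show ?case using Gf_step[OF I less.prems g] by simp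
qed

end

context hoeff begin

lemma Hf_orth:
  assumes I: "finite I" and T: "T \<subseteq> I" "card T \<le> k" and T': "T' \<subseteq> I" "card T' \<le> k"
    and ne: "T \<noteq> T'"
  shows "(\<integral>\<omega>. Hf T \<omega> * Hf T' \<omega> \<partial>Om I) = 0"
proof -
  have fin: "finite T" "finite T'" using I T T' finite_subset by blast+
  have main: "(\<integral>\<omega>. Hf A \<omega> * Hf B \<omega> \<partial>Om I) = 0"
    if "A \<subseteq> I" "card A \<le> k" "B \<subseteq> I" "card B \<le> k" "i \<in> A" "i \<notin> B" for A B i
  proof (rule Hf_degen[OF I that(1,5,2) sq_Hf[OF I that(3,4)]])
    have "finite B" using I that(3) finite_subset by blast
    then show "indep_i I i (Hf B)" unfolding indep_i_def using that(6) by (simp add: Hf_upd)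
  qed
  from ne obtain i where "(i \<in> T \<and> i \<notin> T') \<or> (i \<in> T' \<and> i \<notin> T)" by blast
  then show ?thesis
  proof
    assume "i \<in> T \<and> i \<notin> T'" then show ?thesis using main[OF T T'] by blast
  next
    assume h: "i \<in> T' \<and> i \<notin> T"
    have e: "(\<lambda>\<omega>. Hf T \<omega> * Hf T' \<omega>) = (\<lambda>\<omega>. Hf T' \<omega> * Hf T \<omega>)" by (rule ext) (rule mult.commute)
    show ?thesis unfolding e using main[OF T' T] h by blast
  qed
qed

lemma Hf_mean:
  assumes I: "finite I" and T: "T \<subseteq> I" "card T \<le> k" "T \<noteq> {}"
  shows "(\<integral>\<omega>. Hf T \<omega> \<partial>Om I) = 0"
proof -
  obtain i where i: "i \<in> T" using T by blast
  have "(\<integral>\<omega>. Hf T \<omega> * 1 \<partial>Om I) = 0"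
    by (rule Hf_degen[OF I T(1) i T(2) sq_const[OF fin_Om[OF I]]]) (simp add: indep_i_def)
  then show ?thesis by simp
qed

lemma sorted_lessThan: "sorted_list_of_set {..<j} = [0..<j]"
  by (metis atLeast0LessThan sorted_list_of_set_range)

lemma Hf_var:
  assumes I: "finite I" and T: "T \<subseteq> I" "card T \<le> k" "T \<noteq> {}"
  shows "(\<integral>\<omega>. (Hf T \<omega>)\<^sup>2 \<partial>Om I) = hvar s P k (card T)"
proof -
  define j where "j = card T"
  define L where "L = sorted_list_of_set T"
  have fT: "finite T" using I T finite_subset by blast
  have lenL: "length L = j" using fT by (simp add: L_def j_def)
  have dL: "distinct L" "set L \<subseteq> I" using fT T by (auto simp: L_def)
  have Hj: "hterm s P k (map y [0..<j]) = Hf {..<j} y" for y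
    by (simp add: Hf_def sorted_lessThan)
  have "card T > 0" using fT T(3) by (simp add: card_gt_0_iff)
  then have jne: "{..<j} \<noteq> {}" by (auto simp: j_def)
  have sqj: "sq (Om {..<j}) (Hf {..<j})" by (rule sq_Hf) (use T in \<open>auto simp: j_def\<close>)
  have mean: "(\<integral>z. Hf {..<j} z \<partial>Om {..<j}) = 0"
    by (rule Hf_mean) (use T jne in \<open>auto simp: j_def\<close>)
  have "hvar s P k j = (\<integral>y. (Hf {..<j} y)\<^sup>2 \<partial>Om {..<j})"
    unfolding hvar_def Hj mean by simp
  also have "\<dots> = (\<integral>\<omega>. (\<lambda>y. (Hf {..<j} y)\<^sup>2) (rho L \<omega>) \<partial>Om I)"
  proof -
    have m: "(\<lambda>y. (Hf {..<j} y)\<^sup>2) \<in> borel_measurable (Om {..<length L})"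
      using sqj unfolding lenL sq_def by (auto intro: borel_measurable_power)
    show ?thesis using integral_rho[OF dL m] lenL by simp
  qed
  also have "\<dots> = (\<integral>\<omega>. (Hf T \<omega>)\<^sup>2 \<partial>Om I)"
  proof -
    have "Hf {..<j} (rho L \<omega>) = Hf T \<omega>" for \<omega>
      using map_rho[of L \<omega>] lenL by (simp add: Hf_def sorted_lessThan L_def)
    then show ?thesis by simp
  qed
  finally show ?thesis by (simp add: j_def)
qed

lemma sum_orth:
  assumes I: "finite I" and TT: "finite TT" "\<And>T. T \<in> TT \<Longrightarrow> T \<subseteq> I \<and> T \<noteq> {} \<and> card T \<le> k"
  shows "(\<integral>\<omega>. (\<Sum>T\<in>TT. c T * Hf T \<omega>)\<^sup>2 \<partial>Om I) = (\<Sum>T\<in>TT. (c T)\<^sup>2 * hvar s P k (card T))"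
proof -
  have sqH: "sq (Om I) (Hf T)" if "T \<in> TT" for T using sq_Hf[OF I] TT(2)[OF that] by auto
  have int: "integrable (Om I) (\<lambda>\<omega>. c T * c T' * (Hf T \<omega> * Hf T' \<omega>))" if "T \<in> TT" "T' \<in> TT" for T T'
    using sq_mult_integrable[OF sqH[OF that(1)] sqH[OF that(2)]] by simp
  have "(\<integral>\<omega>. (\<Sum>T\<in>TT. c T * Hf T \<omega>)\<^sup>2 \<partial>Om I) =
      (\<integral>\<omega>. (\<Sum>T\<in>TT. \<Sum>T'\<in>TT. c T * c T' * (Hf T \<omega> * Hf T' \<omega>)) \<partial>Om I)"
    by (simp add: power2_eq_square sum_product algebra_simps)
  also have "\<dots> = (\<Sum>T\<in>TT. \<Sum>T'\<in>TT. c T * c T' * (\<integral>\<omega>. Hf T \<omega> * Hf T' \<omega> \<partial>Om I))"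
    using int by (simp add: Bochner_Integration.integral_sum)
  also have "\<dots> = (\<Sum>T\<in>TT. (c T)\<^sup>2 * hvar s P k (card T))"
  proof (rule sum.cong[OF refl])
    fix T assume T: "T \<in> TT"
    have "(\<Sum>T'\<in>TT. c T * c T' * (\<integral>\<omega>. Hf T \<omega> * Hf T' \<omega> \<partial>Om I)) =
        c T * c T * (\<integral>\<omega>. Hf T \<omega> * Hf T \<omega> \<partial>Om I) +
        (\<Sum>T'\<in>TT - {T}. c T * c T' * (\<integral>\<omega>. Hf T \<omega> * Hf T' \<omega> \<partial>Om I))"
      using T TT(1) by (simp add: sum.remove)
    also have "(\<Sum>T'\<in>TT - {T}. c T * c T' * (\<integral>\<omega>. Hf T \<omega> * Hf T' \<omega> \<partial>Om I)) = 0"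
      using Hf_orth[OF I] TT(2) T by (intro sum.neutral) auto
    also have "(\<integral>\<omega>. Hf T \<omega> * Hf T \<omega> \<partial>Om I) = hvar s P k (card T)"
      using Hf_var[OF I] TT(2)[OF T] by (simp add: power2_eq_square)
    finally show "(\<Sum>T'\<in>TT. c T * c T' * (\<integral>\<omega>. Hf T \<omega> * Hf T' \<omega> \<partial>Om I)) = (c T)\<^sup>2 * hvar s P k (card T)"
      by (simp add: power2_eq_square)
  qed
  finally show ?thesis .
qed

end

lemma alg_identity:
  fixes n k t C0 C1 D Bn Ck E :: real
  assumes pos: "C0 > 0" "C1 > 0" "Bn > 0" "Ck > 0" "D > 0" "k > 0" "t > 0" "n > t" "n > k"
    and h1: "k * C0 = n * C1" and h2: "E * (n - t) = (k - t) * D" and h3: "Bn * D = C0 * Ck"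
  shows "k^2 / n^2 * (Bn * (t * (D/C1 - D/C0)^2 + (n - t) * (E/C1 - D/C0)^2))
       = ((n - k) / n)^2 * (t / (1 - t / n)) * Ck^2 / Bn"
proof -
  have n0: "n > 0" "n - t > 0" "n - k > 0" using pos by auto
  have eC1: "C1 = k * C0 / n" using h1 n0 by (simp add: field_simps)
  have eE: "E = (k - t) * D / (n - t)" using h2 n0 by (simp add: field_simps)
  have ha: "D/C1 - D/C0 = D * (n - k) / (k * C0)"
    unfolding eC1 using pos n0 by (simp add: field_simps)
  have hb: "E/C1 - D/C0 = - (D * t * (n - k) / (k * C0 * (n - t)))"
  proof -
    have "E/C1 - D/C0 = D / (k * C0) * ((k - t) * n / (n - t) - k)"
      unfolding eC1 eE using pos n0 by (simp add: field_simps)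
    also have "(k - t) * n / (n - t) - k = - (t * (n - k) / (n - t))"
      using n0 by (simp add: field_simps)
    finally show ?thesis by simp
  qed
  define Q where "Q = D * (n - k) / (k * C0)"
  define r where "r = t / (n - t)"
  have hb': "E/C1 - D/C0 = - (Q * r)"
    unfolding hb Q_def r_def using n0 pos by (simp add: field_simps)
  have hs: "t * (D/C1 - D/C0)^2 + (n - t) * (E/C1 - D/C0)^2 = (D * (n - k) / (k * C0))^2 * (t * n / (n - t))"
  proof -
    have "t * (D/C1 - D/C0)^2 + (n - t) * (E/C1 - D/C0)^2 = Q^2 * (t + (n - t) * r^2)"
      unfolding ha hb' Q_def[symmetric] by (simp add: power2_eq_square algebra_simps)
    also have "t + (n - t) * r^2 = t * n / (n - t)"
    proof -
      have r1: "(n - t) * r = t" unfolding r_def using n0 by simp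
      have "t + (n - t) * r^2 = t + ((n - t) * r) * r" by (simp add: power2_eq_square mult.assoc)
      also have "\<dots> = t + t * r" by (simp only: r1)
      also have "\<dots> = t * (1 + r)" by (simp add: algebra_simps)
      finally have "t + (n - t) * r^2 = t * (1 + r)" .
      moreover have "1 + r = n / (n - t)" unfolding r_def using n0 by (simp add: field_simps)
      ultimately show ?thesis by simp
    qed
    finally show ?thesis unfolding Q_def .
  qed
  have eD: "D = C0 * Ck / Bn" using h3 pos by (simp add: field_simps)
  have "k^2 / n^2 * (Bn * ((D * (n - k) / (k * C0))^2 * (t * n / (n - t))))
      = Ck^2 * (n - k)^2 * t / (n * Bn * (n - t))"
    unfolding eD using pos n0 by (simp add: power2_eq_square field_simps)
  also have "\<dots> = ((n - k) / n)^2 * (t / (1 - t / n)) * Ck^2 / Bn"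
  proof -
    have "t / (1 - t / n) = t * n / (n - t)" using n0 by (simp add: field_simps)
    then show ?thesis using n0 pos by (simp add: power2_eq_square field_simps)
  qed
  finally show ?thesis unfolding hs .
qed

lemma binom_identity:
  fixes n k t :: nat
  assumes t: "1 \<le> t" "t \<le> k" and kn: "k < n"
  shows "real k ^ 2 / real n ^ 2 * (real (n choose t) *
      (real t * (real ((n-t) choose (k-t)) / real ((n-1) choose (k-1)) - real ((n-t) choose (k-t)) / real (n choose k))\<^sup>2
     + real (n - t) * (real (if t + 1 \<le> k then (n - t - 1) choose (k - t - 1) else 0) / real ((n-1) choose (k-1))
          - real ((n-t) choose (k-t)) / real (n choose k))\<^sup>2))
   = ((real (n - k) / real n)\<^sup>2 * (real t / (1 - real t / real n))) * real (k choose t) ^ 2 / real (n choose t)"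
proof -
  define C0 where "C0 = real (n choose k)"
  define C1 where "C1 = real ((n-1) choose (k-1))"
  define D where "D = real ((n-t) choose (k-t))"
  define Bn where "Bn = real (n choose t)"
  define Ck where "Ck = real (k choose t)"
  define E where "E = real (if t + 1 \<le> k then (n - t - 1) choose (k - t - 1) else 0)"
  have pos: "C0 > 0" "C1 > 0" "Bn > 0" "Ck > 0" "D > 0"
    unfolding C0_def C1_def Bn_def Ck_def D_def of_nat_0_less_iff zero_less_binomial_iff
    using t kn by linarith+
  have h1n: "k * (n choose k) = n * ((n - 1) choose (k - 1))"
    using t by (intro times_binomial_minus1_eq) simp
  have h1: "real k * C0 = real n * C1"
    using arg_cong[OF h1n, of real] unfolding of_nat_mult C0_def C1_def .
  have h2: "E * real (n - t) = real (k - t) * D"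
  proof (cases "t + 1 \<le> k")
    case True
    have e: "(k - t) * ((n - t) choose (k - t)) = (n - t) * ((n - t - 1) choose (k - t - 1))"
      using True by (intro times_binomial_minus1_eq) simp
    have "E = real ((n - t - 1) choose (k - t - 1))" using True by (simp add: E_def)
    then show ?thesis using arg_cong[OF e, of real] unfolding of_nat_mult D_def
      by (simp only: mult.commute)
  next
    case False
    then have "k = t" using t by simp
    then show ?thesis by (simp add: E_def)
  qed
  have h3n: "(n choose t) * ((n - t) choose (k - t)) = (n choose k) * (k choose t)"
    using choose_mult[of t k n] t kn by simp
  have h3: "Bn * D = C0 * Ck"
    using arg_cong[OF h3n, of real] unfolding of_nat_mult Bn_def D_def C0_def Ck_def .
  have nt: "real (n - t) = real n - real t" "real (n - k) = real n - real k" "real (k - t) = real k - real t"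
    using t kn by auto
  have A: "real k ^ 2 / real n ^ 2 * (Bn * (real t * (D/C1 - D/C0)^2 + (real n - real t) * (E/C1 - D/C0)^2))
       = ((real n - real k) / real n)^2 * (real t / (1 - real t / real n)) * Ck^2 / Bn"
  proof (rule alg_identity[OF pos _ _ _ _ h1 _ h3])
    show "real k > 0" "real t > 0" "real n > real t" "real n > real k" using t kn by auto
    show "E * (real n - real t) = (real k - real t) * D" using h2 unfolding nt .
  qed
  show ?thesis unfolding nt(1,2) using A unfolding C0_def C1_def D_def Bn_def Ck_def E_def .
qed

lemma card_supersets:
  fixes N U :: "nat set"
  assumes N: "finite N" and U: "U \<subseteq> N" "card U \<le> k"
  shows "card {S. S \<subseteq> N \<and> card S = k \<and> U \<subseteq> S} = (card N - card U) choose (k - card U)"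
proof -
  have fU: "finite U" using N U finite_subset by blast
  have "bij_betw (\<lambda>S. S - U) {S. S \<subseteq> N \<and> card S = k \<and> U \<subseteq> S} {B. B \<subseteq> N - U \<and> card B = k - card U}"
  proof (rule bij_betw_byWitness[where f'="\<lambda>B. B \<union> U"])
    show "\<forall>S\<in>{S. S \<subseteq> N \<and> card S = k \<and> U \<subseteq> S}. S - U \<union> U = S" by auto
    show "\<forall>B\<in>{B. B \<subseteq> N - U \<and> card B = k - card U}. B \<union> U - U = B" by auto
    show "(\<lambda>S. S - U) ` {S. S \<subseteq> N \<and> card S = k \<and> U \<subseteq> S} \<subseteq> {B. B \<subseteq> N - U \<and> card B = k - card U}"
      using fU by (auto simp: card_Diff_subset)
    show "(\<lambda>B. B \<union> U) ` {B. B \<subseteq> N - U \<and> card B = k - card U} \<subseteq> {S. S \<subseteq> N \<and> card S = k \<and> U \<subseteq> S}"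
    proof safe
      fix B x assume B: "B \<subseteq> N - U" "card B = k - card U"
      have fB: "finite B" using B N finite_subset by blast
      have "card (B \<union> U) = card B + card U" using B fB fU by (intro card_Un_disjoint) auto
      then show "card (B \<union> U) = k" using B U by simp
      show "x \<in> B \<Longrightarrow> x \<in> N" using B by auto
      show "x \<in> U \<Longrightarrow> x \<in> N" using U by auto
    qed
  qed
  then have "card {S. S \<subseteq> N \<and> card S = k \<and> U \<subseteq> S} = card {B. B \<subseteq> N - U \<and> card B = k - card U}"
    by (rule bij_betw_same_card)
  also have "\<dots> = card (N - U) choose (k - card U)" using N by (intro n_subsets) simp
  also have "card (N - U) = card N - card U" using fU U by (simp add: card_Diff_subset)
  finally show ?thesis .
qed

lemma card_supersets_big:
  fixes N U :: "nat set"
  assumes N: "finite N" and U: "card U > k"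
  shows "{S. S \<subseteq> N \<and> card S = k \<and> U \<subseteq> S} = {}"
proof -
  have "card U \<le> card S" if "S \<subseteq> N" "U \<subseteq> S" for S
    using that N finite_subset by (intro card_mono) auto
  show ?thesis
  proof (rule ccontr)
    assume "{S. S \<subseteq> N \<and> card S = k \<and> U \<subseteq> S} \<noteq> {}"
    then obtain S where S: "S \<subseteq> N" "card S = k" "U \<subseteq> S" by blast
    then have "card U \<le> k" using N finite_subset by (metis card_mono)
    then show False using U by simp
  qed
qed

lemma sum_sub_swap:
  fixes h :: "nat set \<Rightarrow> real" and N :: "nat set"
  assumes N: "finite N" and SS: "SS \<subseteq> {S. S \<subseteq> N \<and> card S = k}"
  shows "(\<Sum>S\<in>SS. \<Sum>A\<in>{A. A \<subseteq> S \<and> A \<noteq> {}}. h A) =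
         (\<Sum>T\<in>{T. T \<subseteq> N \<and> T \<noteq> {} \<and> card T \<le> k}. real (card {S\<in>SS. T \<subseteq> S}) * h T)"
proof -
  let ?TT = "{T. T \<subseteq> N \<and> T \<noteq> {} \<and> card T \<le> k}"
  have fTT: "finite ?TT" by (rule finite_subset[of _ "Pow N"]) (use N in auto)
  have fSS: "finite SS" by (rule finite_subset[of _ "Pow N"]) (use N SS in auto)
  have "(\<Sum>A\<in>{A. A \<subseteq> S \<and> A \<noteq> {}}. h A) = (\<Sum>T\<in>?TT. if T \<subseteq> S then h T else 0)" if S: "S \<in> SS" for S
  proof -
    have SN: "S \<subseteq> N" "card S = k" using S SS by auto
    have "finite S" using SN N finite_subset by blast
    then have "{A. A \<subseteq> S \<and> A \<noteq> {}} = {T\<in>?TT. T \<subseteq> S}" using SN by (auto dest: card_mono)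
    then show ?thesis using sum.inter_filter[OF fTT, of h "\<lambda>T. T \<subseteq> S"] by simp
  qed
  then have "(\<Sum>S\<in>SS. \<Sum>A\<in>{A. A \<subseteq> S \<and> A \<noteq> {}}. h A) = (\<Sum>S\<in>SS. \<Sum>T\<in>?TT. if T \<subseteq> S then h T else 0)"
    by (rule sum.cong[OF refl])
  also have "\<dots> = (\<Sum>T\<in>?TT. \<Sum>S\<in>SS. if T \<subseteq> S then h T else 0)" by (rule sum.swap)
  also have "\<dots> = (\<Sum>T\<in>?TT. real (card {S\<in>SS. T \<subseteq> S}) * h T)"
  proof (intro sum.cong[OF refl])
    fix T
    show "(\<Sum>S\<in>SS. if T \<subseteq> S then h T else 0) = real (card {S\<in>SS. T \<subseteq> S}) * h T"
      using sum.inter_filter[OF fSS, of "\<lambda>_. h T" "\<lambda>S. T \<subseteq> S"] by simp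
  qed
  finally show ?thesis .
qed

context hoeff begin

definition TT :: "nat \<Rightarrow> nat set set" where
  "TT n = {T. T \<subseteq> {1..n} \<and> T \<noteq> {} \<and> card T \<le> k}"
definition cnt :: "nat \<Rightarrow> nat set \<Rightarrow> nat" where
  "cnt n U = card {S. S \<subseteq> {1..n} \<and> card S = k \<and> U \<subseteq> S}"
definition cj :: "nat \<Rightarrow> nat \<Rightarrow> nat set \<Rightarrow> real" where
  "cj n j T = real (cnt n (insert j T)) / real ((n-1) choose (k-1)) - real (cnt n T) / real (n choose k)"

lemma kernel_expand:
  assumes "finite S" "card S = k"
  shows "kernel_at s (\<lambda>i \<omega>. \<omega> i) S \<omega> = theta + (\<Sum>A\<in>{A. A \<subseteq> S \<and> A \<noteq> {}}. Hf A \<omega>)"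
  using Gf_full[OF assms, of \<omega>] Gf_sum[OF assms(1), of \<omega>] by (simp add: kernel_at_def)

lemma e_s0:
  assumes k: "1 \<le> k" "k < n" and j: "j \<in> {1..n}"
  shows "e_stat s (\<lambda>i \<omega>. \<omega> i) n k j \<omega> - s0_stat s (\<lambda>i \<omega>. \<omega> i) n k \<omega> = (\<Sum>T\<in>TT n. cj n j T * Hf T \<omega>)"
proof -
  let ?N = "{1..n}"
  define SSj where "SSj = {S. S \<subseteq> ?N \<and> card S = k \<and> j \<in> S}"
  define SS where "SS = {S. S \<subseteq> ?N \<and> card S = k}"
  define C1 where "C1 = real ((n-1) choose (k-1))"
  define C0 where "C0 = real (n choose k)"
  have C1: "C1 > 0" unfolding C1_def using k by simp
  have C0: "C0 > 0" unfolding C0_def using k by simp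
  have fin: "finite S" if "S \<in> SS \<or> S \<in> SSj" for S
    using that finite_subset[of S ?N] by (auto simp: SS_def SSj_def)
  have cSSj: "real (card SSj) = C1"
  proof -
    have "SSj = {S. S \<subseteq> ?N \<and> card S = k \<and> {j} \<subseteq> S}" by (auto simp: SSj_def)
    then show ?thesis using card_supersets[of ?N "{j}" k] j k by (simp add: C1_def)
  qed
  have cSS: "real (card SS) = C0" unfolding SS_def C0_def using n_subsets[of ?N k] by simp
  have filt_j: "{S\<in>SSj. T \<subseteq> S} = {S. S \<subseteq> ?N \<and> card S = k \<and> insert j T \<subseteq> S}" for T
    by (auto simp: SSj_def)
  have filt: "{S\<in>SS. T \<subseteq> S} = {S. S \<subseteq> ?N \<and> card S = k \<and> T \<subseteq> S}" for T
    by (auto simp: SS_def)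
  have "e_stat s (\<lambda>i \<omega>. \<omega> i) n k j \<omega> = 1 / C1 * (\<Sum>S\<in>SSj. theta + (\<Sum>A\<in>{A. A \<subseteq> S \<and> A \<noteq> {}}. Hf A \<omega>))"
    unfolding e_stat_def C1_def[symmetric] SSj_def[symmetric]
    using fin by (intro arg_cong[where f="\<lambda>x. 1 / C1 * x"] sum.cong[OF refl]) (auto simp: kernel_expand SSj_def)
  also have "\<dots> = 1 / C1 * (C1 * theta + (\<Sum>T\<in>TT n. real (cnt n (insert j T)) * Hf T \<omega>))"
  proof -
    have subj: "SSj \<subseteq> {S. S \<subseteq> ?N \<and> card S = k}" by (auto simp: SSj_def)
    have sw: "(\<Sum>S\<in>SSj. \<Sum>A\<in>{A. A \<subseteq> S \<and> A \<noteq> {}}. Hf A \<omega>) = (\<Sum>T\<in>TT n. real (cnt n (insert j T)) * Hf T \<omega>)"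
      unfolding sum_sub_swap[OF finite_atLeastAtMost subj] TT_def filt_j cnt_def ..
    show ?thesis by (simp add: sum.distrib sw cSSj)
  qed
  also have "\<dots> = theta + (\<Sum>T\<in>TT n. real (cnt n (insert j T)) / C1 * Hf T \<omega>)"
    using C1 by (simp add: field_simps sum_distrib_left sum_divide_distrib)
  finally have e: "e_stat s (\<lambda>i \<omega>. \<omega> i) n k j \<omega> = theta + (\<Sum>T\<in>TT n. real (cnt n (insert j T)) / C1 * Hf T \<omega>)" .
  have "s0_stat s (\<lambda>i \<omega>. \<omega> i) n k \<omega> = 1 / C0 * (\<Sum>S\<in>SS. theta + (\<Sum>A\<in>{A. A \<subseteq> S \<and> A \<noteq> {}}. Hf A \<omega>))"
    unfolding s0_stat_def C0_def[symmetric] SS_def[symmetric]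
    using fin by (intro arg_cong[where f="\<lambda>x. 1 / C0 * x"] sum.cong[OF refl]) (auto simp: kernel_expand SS_def)
  also have "\<dots> = 1 / C0 * (C0 * theta + (\<Sum>T\<in>TT n. real (cnt n T) * Hf T \<omega>))"
  proof -
    have sub: "SS \<subseteq> {S. S \<subseteq> ?N \<and> card S = k}" by (auto simp: SS_def)
    have sw: "(\<Sum>S\<in>SS. \<Sum>A\<in>{A. A \<subseteq> S \<and> A \<noteq> {}}. Hf A \<omega>) = (\<Sum>T\<in>TT n. real (cnt n T) * Hf T \<omega>)"
      unfolding sum_sub_swap[OF finite_atLeastAtMost sub] TT_def filt cnt_def ..
    show ?thesis by (simp add: sum.distrib sw cSS)
  qed
  also have "\<dots> = theta + (\<Sum>T\<in>TT n. real (cnt n T) / C0 * Hf T \<omega>)"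
    using C0 by (simp add: field_simps sum_distrib_left sum_divide_distrib)
  finally have s0: "s0_stat s (\<lambda>i \<omega>. \<omega> i) n k \<omega> = theta + (\<Sum>T\<in>TT n. real (cnt n T) / C0 * Hf T \<omega>)" .
  show ?thesis unfolding e s0 cj_def C1_def[symmetric] C0_def[symmetric]
    by (simp add: sum_subtractf left_diff_distrib)
qed

end

context hoeff begin

lemma sum_cj_sq:
  assumes k: "1 \<le> k" "k < n" and T: "T \<in> TT n"
  shows "(\<Sum>j\<in>{1..n}. (cj n j T)\<^sup>2) =
    real (card T) * (real ((n - card T) choose (k - card T)) / real ((n-1) choose (k-1))
        - real ((n - card T) choose (k - card T)) / real (n choose k))\<^sup>2
  + real (n - card T) * (real (if card T + 1 \<le> k then (n - card T - 1) choose (k - card T - 1) else 0) / real ((n-1) choose (k-1))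
        - real ((n - card T) choose (k - card T)) / real (n choose k))\<^sup>2"
proof -
  let ?N = "{1..n}"
  define t where "t = card T"
  have TN: "T \<subseteq> ?N" "card T \<le> k" "T \<noteq> {}" using T by (auto simp: TT_def)
  have fT: "finite T" using TN finite_subset by blast
  have cntT: "cnt n T = (n - t) choose (k - t)"
    unfolding cnt_def t_def using card_supersets[of ?N T k] TN by simp
  have cntj: "cnt n (insert j T) = (if t + 1 \<le> k then (n - t - 1) choose (k - t - 1) else 0)"
    if j: "j \<in> ?N - T" for j
  proof -
    have c: "card (insert j T) = t + 1" using j fT by (simp add: t_def)
    show ?thesis
    proof (cases "t + 1 \<le> k")
      case True
      then show ?thesis unfolding cnt_def using card_supersets[of ?N "insert j T" k] TN j c
        by (simp add: diff_diff_add)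
    next
      case False
      then show ?thesis unfolding cnt_def using card_supersets_big[of ?N k "insert j T"] c by simp
    qed
  qed
  have "(\<Sum>j\<in>?N. (cj n j T)\<^sup>2) = (\<Sum>j\<in>?N - T. (cj n j T)\<^sup>2) + (\<Sum>j\<in>T. (cj n j T)\<^sup>2)"
    by (rule sum.subset_diff[OF TN(1)]) simp
  also have "(\<Sum>j\<in>T. (cj n j T)\<^sup>2) = real t * (real ((n - t) choose (k - t)) / real ((n-1) choose (k-1))
        - real ((n - t) choose (k - t)) / real (n choose k))\<^sup>2"
  proof -
    have "(\<Sum>j\<in>T. (cj n j T)\<^sup>2) = (\<Sum>j\<in>T. (real ((n - t) choose (k - t)) / real ((n-1) choose (k-1))
        - real ((n - t) choose (k - t)) / real (n choose k))\<^sup>2)"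
      by (intro sum.cong refl) (simp add: cj_def insert_absorb cntT)
    then show ?thesis by (simp add: t_def)
  qed
  also have "(\<Sum>j\<in>?N - T. (cj n j T)\<^sup>2) = real (n - t) * (real (if t + 1 \<le> k then (n - t - 1) choose (k - t - 1) else 0) / real ((n-1) choose (k-1))
        - real ((n - t) choose (k - t)) / real (n choose k))\<^sup>2"
  proof -
    have "(\<Sum>j\<in>?N - T. (cj n j T)\<^sup>2) = (\<Sum>j\<in>?N - T. (real (if t + 1 \<le> k then (n - t - 1) choose (k - t - 1) else 0) / real ((n-1) choose (k-1))
        - real ((n - t) choose (k - t)) / real (n choose k))\<^sup>2)"
      by (intro sum.cong refl) (simp only: cj_def cntj cntT)
    moreover have "card (?N - T) = n - t" using TN fT by (simp add: card_Diff_subset t_def)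
    ultimately show ?thesis by simp
  qed
  finally show ?thesis by (simp add: t_def add.commute)
qed

lemma main_Om:
  assumes k: "1 \<le> k" "k < n"
  shows "(\<integral>\<omega>. psIJ_U s (\<lambda>i \<omega>. \<omega> i) n k \<omega> \<partial>Om {1..n}) =
    (\<Sum>j=1..k. ((real (n - k) / real n)\<^sup>2 * (real j / (1 - real j / real n)))
               * real (k choose j) ^ 2 / real (n choose j) * hvar s P k j)"
proof -
  let ?N = "{1..n}"
  let ?X = "\<lambda>i \<omega>. \<omega> i"
  define F where "F = (\<lambda>t. real t * (real ((n - t) choose (k - t)) / real ((n-1) choose (k-1))
        - real ((n - t) choose (k - t)) / real (n choose k))\<^sup>2
    + real (n - t) * (real (if t + 1 \<le> k then (n - t - 1) choose (k - t - 1) else 0) / real ((n-1) choose (k-1))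
        - real ((n - t) choose (k - t)) / real (n choose k))\<^sup>2)"
  have finN: "finite ?N" by simp
  have fTT: "finite (TT n)" unfolding TT_def by (rule finite_subset[of _ "Pow ?N"]) auto
  have TTp: "\<And>T. T \<in> TT n \<Longrightarrow> T \<subseteq> ?N \<and> T \<noteq> {} \<and> card T \<le> k" by (auto simp: TT_def)
  have sqsum: "sq (Om ?N) (\<lambda>\<omega>. \<Sum>T\<in>TT n. cj n j T * Hf T \<omega>)" for j
    using TTp by (intro sq_sum[OF fin_Om[OF finN]] sq_cmult sq_Hf[OF finN]) auto
  have ed: "e_stat s ?X n k j \<omega> - s0_stat s ?X n k \<omega> = (\<Sum>T\<in>TT n. cj n j T * Hf T \<omega>)" if "j \<in> ?N" for j \<omega>
    using e_s0[OF k that] .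
  have "(\<integral>\<omega>. psIJ_U s ?X n k \<omega> \<partial>Om ?N) =
      (\<integral>\<omega>. real k ^ 2 / real n ^ 2 * (\<Sum>j\<in>?N. (\<Sum>T\<in>TT n. cj n j T * Hf T \<omega>)\<^sup>2) \<partial>Om ?N)"
    unfolding psIJ_U_def by (intro Bochner_Integration.integral_cong refl) (simp add: ed)
  also have "\<dots> = real k ^ 2 / real n ^ 2 * (\<Sum>j\<in>?N. \<integral>\<omega>. (\<Sum>T\<in>TT n. cj n j T * Hf T \<omega>)\<^sup>2 \<partial>Om ?N)"
    using sqsum by (simp add: Bochner_Integration.integral_sum sq_def)
  also have "\<dots> = real k ^ 2 / real n ^ 2 * (\<Sum>j\<in>?N. \<Sum>T\<in>TT n. (cj n j T)\<^sup>2 * hvar s P k (card T))"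
    using sum_orth[OF finN fTT TTp] by simp
  also have "\<dots> = real k ^ 2 / real n ^ 2 * (\<Sum>T\<in>TT n. hvar s P k (card T) * F (card T))"
  proof -
    have "(\<Sum>j\<in>?N. \<Sum>T\<in>TT n. (cj n j T)\<^sup>2 * hvar s P k (card T)) =
        (\<Sum>T\<in>TT n. \<Sum>j\<in>?N. (cj n j T)\<^sup>2 * hvar s P k (card T))" by (rule sum.swap)
    also have "\<dots> = (\<Sum>T\<in>TT n. hvar s P k (card T) * F (card T))"
    proof (rule sum.cong[OF refl])
      fix T assume T: "T \<in> TT n"
      show "(\<Sum>j\<in>?N. (cj n j T)\<^sup>2 * hvar s P k (card T)) = hvar s P k (card T) * F (card T)"
      proof -
        have "(\<Sum>j\<in>?N. (cj n j T)\<^sup>2 * hvar s P k (card T)) = (\<Sum>j\<in>?N. (cj n j T)\<^sup>2) * hvar s P k (card T)"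
          by (rule sum_distrib_right[symmetric])
        also have "(\<Sum>j\<in>?N. (cj n j T)\<^sup>2) = F (card T)"
          unfolding F_def by (rule sum_cj_sq[OF k T])
        finally show ?thesis by (simp only: mult.commute)
      qed
    qed
    finally show ?thesis by simp
  qed
  also have "(\<Sum>T\<in>TT n. hvar s P k (card T) * F (card T)) =
      (\<Sum>t\<in>{1..k}. real (n choose t) * (hvar s P k t * F t))"
  proof -
    have img: "card ` TT n \<subseteq> {1..k}"
    proof
      fix x assume "x \<in> card ` TT n"
      then obtain T where T: "T \<in> TT n" "x = card T" by blast
      have "finite T" using TTp[OF T(1)] finite_subset[of T ?N] by auto
      then show "x \<in> {1..k}" using TTp[OF T(1)] T(2) by (auto simp: Suc_le_eq card_gt_0_iff)
    qed
    have "(\<Sum>T\<in>TT n. hvar s P k (card T) * F (card T)) =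
        (\<Sum>t\<in>{1..k}. \<Sum>T\<in>{T. T \<in> TT n \<and> card T = t}. hvar s P k (card T) * F (card T))"
      by (rule sum.group[OF fTT _ img, symmetric]) simp
    also have "\<dots> = (\<Sum>t\<in>{1..k}. real (n choose t) * (hvar s P k t * F t))"
    proof (rule sum.cong[OF refl])
      fix t assume t: "t \<in> {1..k}"
      have "{T. T \<in> TT n \<and> card T = t} = {T. T \<subseteq> ?N \<and> card T = t}"
        using t by (auto simp: TT_def)
      then have "card {T. T \<in> TT n \<and> card T = t} = n choose t" using n_subsets[OF finN, of t] by simp
      then show "(\<Sum>T\<in>{T. T \<in> TT n \<and> card T = t}. hvar s P k (card T) * F (card T)) =
          real (n choose t) * (hvar s P k t * F t)" by simp
    qed
    finally show ?thesis .
  qed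
  also have "real k ^ 2 / real n ^ 2 * (\<Sum>t\<in>{1..k}. real (n choose t) * (hvar s P k t * F t)) =
      (\<Sum>t\<in>{1..k}. (real k ^ 2 / real n ^ 2 * (real (n choose t) * F t)) * hvar s P k t)"
    by (simp add: sum_distrib_left mult_ac)
  also have "\<dots> = (\<Sum>j=1..k. ((real (n - k) / real n)\<^sup>2 * (real j / (1 - real j / real n)))
               * real (k choose j) ^ 2 / real (n choose j) * hvar s P k j)"
  proof (rule sum.cong[OF refl])
    fix t assume t: "t \<in> {1..k}"
    show "(real k ^ 2 / real n ^ 2 * (real (n choose t) * F t)) * hvar s P k t =
      ((real (n - k) / real n)\<^sup>2 * (real t / (1 - real t / real n))) * real (k choose t) ^ 2 / real (n choose t) * hvar s P k t"
      unfolding F_def using binom_identity[of t k n] t k by simp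
  qed
  finally show ?thesis .
qed

end

context hoeff begin

lemma psIJ_meas:
  assumes k: "1 \<le> k" "k < n"
  shows "psIJ_U s (\<lambda>i \<omega>. \<omega> i) n k \<in> borel_measurable (Om {1..n})"
proof -
  let ?N = "{1..n}"
  have finN: "finite ?N" by simp
  have TTp: "\<And>T. T \<in> TT n \<Longrightarrow> T \<subseteq> ?N \<and> T \<noteq> {} \<and> card T \<le> k" by (auto simp: TT_def)
  have m: "(\<lambda>\<omega>. \<Sum>T\<in>TT n. cj n j T * Hf T \<omega>) \<in> borel_measurable (Om ?N)" for j
    using sq_sum[OF fin_Om[OF finN], of "TT n" "\<lambda>T \<omega>. cj n j T * Hf T \<omega>"] TTp
      sq_cmult[OF sq_Hf[OF finN]] by (auto simp: sq_def)
  have e: "psIJ_U s (\<lambda>i \<omega>. \<omega> i) n k = (\<lambda>\<omega>. real k ^ 2 / real n ^ 2 * (\<Sum>j\<in>?N. (\<Sum>T\<in>TT n. cj n j T * Hf T \<omega>)\<^sup>2))"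
    unfolding psIJ_U_def by (intro ext arg_cong[where f="\<lambda>x. real k ^ 2 / real n ^ 2 * x"] sum.cong refl)
      (simp add: e_s0[OF k])
  show ?thesis unfolding e
    by (intro borel_measurable_times borel_measurable_const borel_measurable_sum borel_measurable_power m)
qed

end

lemma kernel_at_restrict:
  assumes "S \<subseteq> N" "finite S"
  shows "kernel_at s X S x = kernel_at s (\<lambda>i \<omega>. \<omega> i) S (\<lambda>i\<in>N. X i x)"
  unfolding kernel_at_def using assms by (intro arg_cong[where f=s] map_cong refl) auto

lemma psIJ_restrict:
  "psIJ_U s X n k x = psIJ_U s (\<lambda>i \<omega>. \<omega> i) n k (\<lambda>i\<in>{1..n}. X i x)"
proof -
  have kk: "kernel_at s X S x = kernel_at s (\<lambda>i \<omega>. \<omega> i) S (\<lambda>i\<in>{1..n}. X i x)" if "S \<subseteq> {1..n}" for S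
    using that finite_subset[OF that] by (intro kernel_at_restrict) auto
  have e: "e_stat s X n k j x = e_stat s (\<lambda>i \<omega>. \<omega> i) n k j (\<lambda>i\<in>{1..n}. X i x)" for j
    unfolding e_stat_def using kk by (intro arg_cong[where f="\<lambda>y. _ * y"] sum.cong refl) auto
  have s0: "s0_stat s X n k x = s0_stat s (\<lambda>i \<omega>. \<omega> i) n k (\<lambda>i\<in>{1..n}. X i x)"
    unfolding s0_stat_def using kk by (intro arg_cong[where f="\<lambda>y. _ * y"] sum.cong refl) auto
  show ?thesis unfolding psIJ_U_def e s0 ..
qed

theorem theorem5:
  fixes M :: "'a measure" and P :: "'b measure" and X :: "nat \<Rightarrow> 'a \<Rightarrow> 'b"
    and s :: "'b list \<Rightarrow> real" and n k :: nat
  assumes "prob_space M"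
    and "prob_space P"
    and "prob_space.indep_vars M (\<lambda>_. P) X {1..n}"
    and "\<And>i. i \<in> {1..n} \<Longrightarrow> distr M P (X i) = P"
    and "1 \<le> k" and "k < n"
    and "\<And>xs ys. length xs = k \<Longrightarrow> mset xs = mset ys \<Longrightarrow> s xs = s ys"
    and "(\<lambda>y. s (map y [0..<k])) \<in> borel_measurable (PiM {..<k} (\<lambda>_. P))"
    and "integrable (PiM {..<k} (\<lambda>_. P)) (\<lambda>y. (s (map y [0..<k]))\<^sup>2)"
  shows "(\<integral>\<omega>. psIJ_U s X n k \<omega> \<partial>M) =
    (\<Sum>j=1..k. ((real (n - k) / real n)\<^sup>2 * (real j / (1 - real j / real n)))
               * real (k choose j) ^ 2 / real (n choose j) * hvar s P k j)"
proof -
  have hl: "hoeff P s k"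
    unfolding hoeff_def using assms(2,8,9) assms(7) by blast
  interpret H: hoeff P s k by (rule hl)
  interpret M: prob_space M by fact
  let ?N = "{1..n}"
  let ?R = "\<lambda>x. \<lambda>i\<in>?N. X i x"
  have rv: "\<And>i. i \<in> ?N \<Longrightarrow> X i \<in> measurable M P"
    using assms(3) unfolding M.indep_vars_def by blast
  have ne: "?N \<noteq> {}" using assms(5,6) by auto
  have D: "distr M (H.Om ?N) ?R = H.Om ?N"
  proof -
    have "distr M (H.Om ?N) ?R = PiM ?N (\<lambda>i. distr M P (X i))"
      using M.indep_vars_iff_distr_eq_PiM'[OF ne rv] assms(3) by simp
    also have "\<dots> = H.Om ?N" using assms(4) by (intro PiM_cong) auto
    finally show ?thesis .
  qed
  have Rm: "?R \<in> measurable M (H.Om ?N)" using rv by (intro measurable_restrict) auto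
  have "(\<integral>\<omega>. psIJ_U s X n k \<omega> \<partial>M) = (\<integral>\<omega>. psIJ_U s (\<lambda>i \<omega>. \<omega> i) n k (?R \<omega>) \<partial>M)"
    by (rule Bochner_Integration.integral_cong[OF refl]) (rule psIJ_restrict)
  also have "\<dots> = (\<integral>\<omega>. psIJ_U s (\<lambda>i \<omega>. \<omega> i) n k \<omega> \<partial>distr M (H.Om ?N) ?R)"
    by (rule integral_distr[OF Rm H.psIJ_meas[OF assms(5,6)], symmetric])
  also have "\<dots> = (\<integral>\<omega>. psIJ_U s (\<lambda>i \<omega>. \<omega> i) n k \<omega> \<partial>H.Om ?N)" unfolding D ..
  finally show ?thesis using H.main_Om[OF assms(5,6)] by simp
qed

end
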